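(* Let $K$ be a field, $P$ an arbitrary poset, and let $P=\bigsqcup_{i\in I}P_i$ be the decomposition of $P$ into its connected components. For $\alpha\in FI(P)$ and $i\in I$ let $\alpha_i\in FI(P_i)$ be the restriction $\alpha_i(x,y)=\alpha(x,y)$ for $x\le y$ in $P_i$. Then $\alpha$ is superregular in $FI(P)$ if and only if for every $i\in I$, $\alpha_i$ is either $0$ or invertible in $FI(P_i)$. (Equivalently, identifying $FI(P)$ with $\prod_{i\in I}FI(P_i)$, the set of superregular elements equals $\prod_{i\in I}U(P_i)^0$, where $U(P_i)$ is the group of units of $FI(P_i)$ and $U(P_i)^0=U(P_i)\cup\{0\}$.)
   Context: $K$ is a field, $P$ an arbitrary poset. $I(P)$ is the set of functions $\alpha$ assigning to each pair $x\le y$ in $P$ a value $\alpha(x,y)\in K$. An element $\alpha\in I(P)$ is a finitary series if for all $x<y$ in $P$ there are only finitely many pairs $(u,v)$ with $x\le u<v\le y$ and $\alpha(u,v)\neq0$; $FI(P)$ is the set of finitary series. $FI(P)$ is an associative $K$-algebra under pointwise addition and convolution $(\alpha\beta)(x,y)=\sum_{x\le z\le y}\alpha(x,z)\beta(z,y)$. Connected components of $P$ are the classes of the equivalence relation generated by comparability. An element $\alpha$ of an algebra $A$ is superregular if it is regular (some $\chi\in A$ has $\alpha\chi\alpha=\alpha$) and there is exactly one $\alpha^*\in A$ satisfying $\alpha\alpha^*\alpha=\alpha$ and $\alpha^*\alpha\alpha^*=\alpha^*$. *)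

theory Defs
  imports Main
begin

text \<open>A poset is represented by a carrier set P inside a type of class order
 (the order on P is the restriction of the type's order).\<close>

definition incidence :: "'a::order set \<Rightarrow> ('a \<Rightarrow> 'a \<Rightarrow> 'k::field) set" where
  "incidence P = {a. \<forall>x y. a x y \<noteq> 0 \<longrightarrow> x \<in> P \<and> y \<in> P \<and> x \<le> y}"

definition finitary :: "'a::order set \<Rightarrow> ('a \<Rightarrow> 'a \<Rightarrow> 'k::field) \<Rightarrow> bool" where
  "finitary P a \<longleftrightarrow> (\<forall>x\<in>P. \<forall>y\<in>P. x < y \<longrightarrow>
      finite {(u, v). u \<in> P \<and> v \<in> P \<and> x \<le> u \<and> u < v \<and> v \<le> y \<and> a u v \<noteq> 0})"

definition FI :: "'a::order set \<Rightarrow> ('a \<Rightarrow> 'a \<Rightarrow> 'k::field) set" where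
  "FI P = {a \<in> incidence P. finitary P a}"

text \<open>Convolution.  The sum ranges over the z with a(x,z) nonzero, which is finite
 whenever a is finitary; all other terms vanish.\<close>
definition conv :: "'a::order set \<Rightarrow> ('a \<Rightarrow> 'a \<Rightarrow> 'k::field) \<Rightarrow> ('a \<Rightarrow> 'a \<Rightarrow> 'k) \<Rightarrow> ('a \<Rightarrow> 'a \<Rightarrow> 'k)" where
  "conv P a b = (\<lambda>x y. if x \<in> P \<and> y \<in> P \<and> x \<le> y
      then (\<Sum>z\<in>{z \<in> P. x \<le> z \<and> z \<le> y \<and> a x z \<noteq> 0}. a x z * b z y) else 0)"

definition one_FI :: "'a::order set \<Rightarrow> ('a \<Rightarrow> 'a \<Rightarrow> 'k::field)" where
  "one_FI P = (\<lambda>x y. if x \<in> P \<and> x = y then 1 else 0)"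

definition regular_in :: "'b set \<Rightarrow> ('b \<Rightarrow> 'b \<Rightarrow> 'b) \<Rightarrow> 'b \<Rightarrow> bool" where
  "regular_in A mult a \<longleftrightarrow> (\<exists>c\<in>A. mult (mult a c) a = a)"

definition superregular_in :: "'b set \<Rightarrow> ('b \<Rightarrow> 'b \<Rightarrow> 'b) \<Rightarrow> 'b \<Rightarrow> bool" where
  "superregular_in A mult a \<longleftrightarrow> a \<in> A \<and> regular_in A mult a \<and>
     (\<exists>!b. b \<in> A \<and> mult (mult a b) a = a \<and> mult (mult b a) b = b)"

definition invertible_in :: "'b set \<Rightarrow> ('b \<Rightarrow> 'b \<Rightarrow> 'b) \<Rightarrow> 'b \<Rightarrow> 'b \<Rightarrow> bool" where
  "invertible_in A mult one a \<longleftrightarrow> a \<in> A \<and> (\<exists>b\<in>A. mult a b = one \<and> mult b a = one)"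

definition comp_rel :: "'a::order set \<Rightarrow> ('a \<times> 'a) set" where
  "comp_rel P = {(x, y). x \<in> P \<and> y \<in> P \<and> (x \<le> y \<or> y \<le> x)}"

definition components :: "'a::order set \<Rightarrow> 'a set set" where
  "components P = (\<lambda>x. (comp_rel P)\<^sup>* `` {x}) ` P"

definition restrict_to :: "'a set \<Rightarrow> ('a \<Rightarrow> 'a \<Rightarrow> 'k::zero) \<Rightarrow> ('a \<Rightarrow> 'a \<Rightarrow> 'k)" where
  "restrict_to C a = (\<lambda>x y. if x \<in> C \<and> y \<in> C then a x y else 0)"

end

theory Submission
  imports Defs
begin


definition NN :: "'a::order set \<Rightarrow> ('a \<Rightarrow> 'a \<Rightarrow> 'k::field) \<Rightarrow> 'a \<Rightarrow> 'a \<Rightarrow> ('a \<times> 'a) set" where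
  "NN Q a x y = {(u, v). u \<in> Q \<and> v \<in> Q \<and> x \<le> u \<and> u < v \<and> v \<le> y \<and> a u v \<noteq> 0}"

lemma incD: "a \<in> incidence Q \<Longrightarrow> a x y \<noteq> 0 \<Longrightarrow> x \<in> Q \<and> y \<in> Q \<and> x \<le> y"
  by (auto simp: incidence_def)

lemma FI_inc: "a \<in> FI Q \<Longrightarrow> a \<in> incidence Q"
  by (simp add: FI_def)

lemma FI_incD: "a \<in> FI Q \<Longrightarrow> a x y \<noteq> 0 \<Longrightarrow> x \<in> Q \<and> y \<in> Q \<and> x \<le> y"
  using incD FI_inc by blast

lemma NN_fin:
  assumes "a \<in> FI Q" "x \<in> Q" "y \<in> Q"
  shows "finite (NN Q a x y)"
proof (cases "x < y")
  case True
  then show ?thesis using assms unfolding FI_def finitary_def NN_def by auto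
next
  case False
  have "NN Q a x y = {}"
    using False unfolding NN_def by (auto dest: le_less_trans less_le_trans)
  then show ?thesis by simp
qed

lemma supp_fin:
  assumes "a \<in> FI Q" "x \<in> Q" "y \<in> Q"
  shows "finite {z \<in> Q. x \<le> z \<and> z \<le> y \<and> a x z \<noteq> 0}"
proof -
  have "{z \<in> Q. x \<le> z \<and> z \<le> y \<and> a x z \<noteq> 0} \<subseteq> insert x (snd ` NN Q a x y)"
  proof
    fix z assume z: "z \<in> {z \<in> Q. x \<le> z \<and> z \<le> y \<and> a x z \<noteq> 0}"
    show "z \<in> insert x (snd ` NN Q a x y)"
    proof (cases "z = x")
      case False
      then have "(x, z) \<in> NN Q a x y" using z assms unfolding NN_def by auto
      then show ?thesis by force
    qed simp
  qed
  then show ?thesis using NN_fin[OF assms] finite_subset by blast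
qed

lemma conv_out: "\<not> (x \<in> Q \<and> y \<in> Q \<and> x \<le> y) \<Longrightarrow> conv Q a b x y = 0"
  unfolding conv_def by (simp only: if_False)

lemma conv_nz: "conv Q a b x y \<noteq> 0 \<Longrightarrow> x \<in> Q \<and> y \<in> Q \<and> x \<le> y"
  using conv_out by blast

lemma conv_sum:
  assumes a: "a \<in> FI Q" and b: "b \<in> incidence Q" and F: "finite F"
    and sub: "\<And>z. a x z \<noteq> 0 \<Longrightarrow> b z y \<noteq> 0 \<Longrightarrow> z \<in> F"
  shows "conv Q a b x y = (\<Sum>z\<in>F. a x z * b z y)"
proof (cases "x \<in> Q \<and> y \<in> Q \<and> x \<le> y")
  case True
  let ?S = "{z \<in> Q. x \<le> z \<and> z \<le> y \<and> a x z \<noteq> 0}"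
  have fS: "finite ?S" using supp_fin[OF a] True by auto
  have "conv Q a b x y = (\<Sum>z\<in>?S. a x z * b z y)" using True by (simp add: conv_def)
  also have "\<dots> = (\<Sum>z\<in>F. a x z * b z y)"
  proof (rule sum.mono_neutral_cong[OF F fS])
    fix z assume "z \<in> F - ?S"
    then show "a x z * b z y = 0" using incD[OF FI_inc[OF a], of x z] incD[OF b, of z y] by auto
  next
    fix z assume "z \<in> ?S - F"
    then show "a x z * b z y = 0" using sub by auto
  qed simp
  finally show ?thesis .
next
  case False
  have "(\<Sum>z\<in>F. a x z * b z y) = 0"
  proof (rule sum.neutral, rule ballI)
    fix z assume "z \<in> F"
    show "a x z * b z y = 0"
    proof (rule ccontr)
      assume "a x z * b z y \<noteq> 0"
      then have "a x z \<noteq> 0" "b z y \<noteq> 0" by auto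
      then show False using incD[OF FI_inc[OF a], of x z] incD[OF b, of z y] False
        by (auto intro: order_trans)
    qed
  qed
  then show ?thesis using conv_out[OF False] by simp
qed

lemma conv_FI:
  assumes a: "a \<in> FI Q" and b: "b \<in> FI Q"
  shows "conv Q a b \<in> FI Q"
proof -
  have inc: "conv Q a b \<in> incidence Q"
    unfolding incidence_def using conv_nz by blast
  have fin: "finitary Q (conv Q a b)"
    unfolding finitary_def
  proof (intro ballI impI)
    fix x y assume xy: "x \<in> Q" "y \<in> Q" "x < y"
    define T where "T = {x, y} \<union> fst ` (NN Q a x y \<union> NN Q b x y) \<union> snd ` (NN Q a x y \<union> NN Q b x y)"
    have fT: "finite T" unfolding T_def using NN_fin[OF a xy(1,2)] NN_fin[OF b xy(1,2)] by auto
    have key: "(u, v) \<in> T \<times> T"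
      if uv: "u \<in> Q" "v \<in> Q" "x \<le> u" "u < v" "v \<le> y" "conv Q a b u v \<noteq> 0" for u v
    proof -
      from uv have "(\<Sum>z\<in>{z \<in> Q. u \<le> z \<and> z \<le> v \<and> a u z \<noteq> 0}. a u z * b z v) \<noteq> 0"
        by (simp add: conv_def split: if_splits)
      then obtain z where z0: "z \<in> {z \<in> Q. u \<le> z \<and> z \<le> v \<and> a u z \<noteq> 0}" "a u z * b z v \<noteq> 0"
        by (rule sum.not_neutral_contains_not_neutral)
      then have z: "z \<in> Q" "u \<le> z" "z \<le> v" "a u z \<noteq> 0" "b z v \<noteq> 0" by auto
      have "u \<in> T"
      proof (cases "u = z")
        case True
        then have "(u, v) \<in> NN Q b x y" using uv z unfolding NN_def by auto
        then show ?thesis unfolding T_def by force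
      next
        case False
        then have "(u, z) \<in> NN Q a x y" using uv z unfolding NN_def by (auto intro: order_trans)
        then show ?thesis unfolding T_def by force
      qed
      moreover have "v \<in> T"
      proof (cases "v = z")
        case True
        then have "(u, v) \<in> NN Q a x y" using uv z unfolding NN_def by auto
        then show ?thesis unfolding T_def by force
      next
        case False
        then have "(z, v) \<in> NN Q b x y" using uv z unfolding NN_def by (auto intro: order_trans)
        then show ?thesis unfolding T_def by force
      qed
      ultimately show "(u, v) \<in> T \<times> T" by simp
    qed
    have "{(u, v). u \<in> Q \<and> v \<in> Q \<and> x \<le> u \<and> u < v \<and> v \<le> y \<and> conv Q a b u v \<noteq> 0} \<subseteq> T \<times> T"
      using key by blast
    then show "finite {(u, v). u \<in> Q \<and> v \<in> Q \<and> x \<le> u \<and> u < v \<and> v \<le> y \<and> conv Q a b u v \<noteq> 0}"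
      using fT finite_subset by blast
  qed
  show ?thesis using inc fin by (simp add: FI_def)
qed



lemma conv_assoc:
  assumes a: "a \<in> FI Q" and b: "b \<in> FI Q" and c: "c \<in> FI Q"
  shows "conv Q a (conv Q b c) = conv Q (conv Q a b) c"
proof (rule ext, rule ext)
  fix x y
  show "conv Q a (conv Q b c) x y = conv Q (conv Q a b) c x y"
  proof (cases "x \<in> Q \<and> y \<in> Q \<and> x \<le> y")
    case False
    show ?thesis by (rule trans[OF conv_out[OF False] conv_out[OF False, symmetric]])
  next
    case True
    define N where "N = NN Q a x y \<union> NN Q b x y \<union> NN Q c x y"
    define T where "T = {x, y} \<union> fst ` N \<union> snd ` N"
    have fT: "finite T" unfolding T_def N_def using NN_fin[OF a] NN_fin[OF b] NN_fin[OF c] True by auto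
    have Tsub: "\<And>z. z \<in> T \<Longrightarrow> z \<in> Q \<and> x \<le> z \<and> z \<le> y"
      using True unfolding T_def N_def NN_def by (auto intro: order_trans less_imp_le)
    have inN1: "\<And>u v. (u, v) \<in> N \<Longrightarrow> u \<in> T" unfolding T_def by force
    have inN2: "\<And>u v. (u, v) \<in> N \<Longrightarrow> v \<in> T" unfolding T_def by force
    have bcI: "conv Q b c \<in> FI Q" using conv_FI[OF b c] .
    have abI: "conv Q a b \<in> FI Q" using conv_FI[OF a b] .
    have "conv Q a (conv Q b c) x y = (\<Sum>z\<in>T. a x z * conv Q b c z y)"
    proof (rule conv_sum[OF a FI_inc[OF bcI] fT])
      fix z assume z: "a x z \<noteq> 0" "conv Q b c z y \<noteq> 0"
      show "z \<in> T"
      proof (cases "z = x")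
        case True then show ?thesis unfolding T_def by simp
      next
        case False
        then have "(x, z) \<in> NN Q a x y" using z FI_incD[OF a z(1)] conv_nz[OF z(2)] True
          unfolding NN_def by auto
        then show ?thesis using inN2 unfolding N_def by blast
      qed
    qed
    also have "\<dots> = (\<Sum>z\<in>T. a x z * (\<Sum>w\<in>T. b z w * c w y))"
    proof (rule sum.cong[OF refl])
      fix z assume zT: "z \<in> T"
      have "conv Q b c z y = (\<Sum>w\<in>T. b z w * c w y)"
      proof (rule conv_sum[OF b FI_inc[OF c] fT])
        fix w assume w: "b z w \<noteq> 0" "c w y \<noteq> 0"
        show "w \<in> T"
        proof (cases "w = z")
          case True then show ?thesis using zT by simp
        next
          case False
          then have "(z, w) \<in> NN Q b x y" using w FI_incD[OF b w(1)] FI_incD[OF c w(2)] Tsub[OF zT]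
            unfolding NN_def by auto
          then show ?thesis using inN2 unfolding N_def by blast
        qed
      qed
      then show "a x z * conv Q b c z y = a x z * (\<Sum>w\<in>T. b z w * c w y)" by simp
    qed
    also have "\<dots> = (\<Sum>z\<in>T. \<Sum>w\<in>T. a x z * b z w * c w y)"
      by (simp add: sum_distrib_left mult.assoc)
    also have "\<dots> = (\<Sum>w\<in>T. \<Sum>z\<in>T. a x z * b z w * c w y)"
      by (rule sum.swap)
    also have "\<dots> = (\<Sum>w\<in>T. (\<Sum>z\<in>T. a x z * b z w) * c w y)"
      by (simp add: sum_distrib_right)
    also have "\<dots> = (\<Sum>w\<in>T. conv Q a b x w * c w y)"
    proof (rule sum.cong[OF refl])
      fix w assume wT: "w \<in> T"
      have "conv Q a b x w = (\<Sum>z\<in>T. a x z * b z w)"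
      proof (rule conv_sum[OF a FI_inc[OF b] fT])
        fix z assume z: "a x z \<noteq> 0" "b z w \<noteq> 0"
        show "z \<in> T"
        proof (cases "z = x")
          case True then show ?thesis unfolding T_def by simp
        next
          case False
          then have "(x, z) \<in> NN Q a x y" using z FI_incD[OF a z(1)] FI_incD[OF b z(2)] Tsub[OF wT]
            unfolding NN_def by (auto intro: order_trans)
          then show ?thesis using inN2 unfolding N_def by blast
        qed
      qed
      then show "(\<Sum>z\<in>T. a x z * b z w) * c w y = conv Q a b x w * c w y" by simp
    qed
    also have "\<dots> = conv Q (conv Q a b) c x y"
    proof (rule conv_sum[OF abI FI_inc[OF c] fT, symmetric])
      fix w assume w: "conv Q a b x w \<noteq> 0" "c w y \<noteq> 0"
      show "w \<in> T"
      proof (cases "w = y")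
        case True then show ?thesis unfolding T_def by simp
      next
        case False
        then have "(w, y) \<in> NN Q c x y" using conv_nz[OF w(1)] FI_incD[OF c w(2)] w(2)
          unfolding NN_def by (auto simp: less_le)
        then show ?thesis using inN1 unfolding N_def by blast
      qed
    qed
    finally show ?thesis .
  qed
qed

lemma one_FI: "(one_FI Q :: 'a::order \<Rightarrow> 'a \<Rightarrow> 'k::field) \<in> FI Q"
proof -
  have "(one_FI Q :: 'a \<Rightarrow> 'a \<Rightarrow> 'k) \<in> incidence Q" by (auto simp: incidence_def one_FI_def)
  moreover have "finitary Q (one_FI Q :: 'a \<Rightarrow> 'a \<Rightarrow> 'k)" unfolding finitary_def
  proof (intro ballI impI)
    fix x y
    have "{(u, v). u \<in> Q \<and> v \<in> Q \<and> x \<le> u \<and> u < v \<and> v \<le> y \<and> one_FI Q u v \<noteq> (0::'k)} = {}"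
      by (auto simp: one_FI_def)
    then show "finite {(u, v). u \<in> Q \<and> v \<in> Q \<and> x \<le> u \<and> u < v \<and> v \<le> y \<and> one_FI Q u v \<noteq> (0::'k)}"
      by (metis finite.emptyI)
  qed
  ultimately show ?thesis by (simp add: FI_def)
qed

lemma conv_one_left:
  assumes a: "a \<in> incidence Q"
  shows "conv Q (one_FI Q) a = a"
proof (rule ext, rule ext)
  fix x y
  have "conv Q (one_FI Q) a x y = (\<Sum>z\<in>{x}. one_FI Q x z * a z y)"
    by (rule conv_sum[OF one_FI a]) (auto simp: one_FI_def split: if_splits)
  then show "conv Q (one_FI Q) a x y = a x y" using incD[OF a, of x y] by (auto simp: one_FI_def)
qed

lemma conv_one_right:
  assumes a: "a \<in> FI Q"
  shows "conv Q a (one_FI Q) = a"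
proof (rule ext, rule ext)
  fix x y
  have "conv Q a (one_FI Q) x y = (\<Sum>z\<in>{y}. a x z * one_FI Q z y)"
    by (rule conv_sum[OF a FI_inc[OF one_FI]]) (auto simp: one_FI_def split: if_splits)
  then show "conv Q a (one_FI Q) x y = a x y"
    using FI_incD[OF a, of x y] by (auto simp: one_FI_def)
qed

lemma zero_FI: "(\<lambda>x y. 0) \<in> FI Q"
  by (simp add: FI_def incidence_def finitary_def)

lemma conv_zero_left: "conv Q (\<lambda>x y. 0) a = (\<lambda>x y. 0)"
  unfolding conv_def by (intro ext) simp

lemma conv_zero_right: "conv Q a (\<lambda>x y. 0) = (\<lambda>x y. 0)"
  unfolding conv_def by (intro ext) simp

lemma plus_FI:
  assumes a: "a \<in> FI Q" and b: "b \<in> FI Q"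
  shows "(\<lambda>x y. a x y + b x y) \<in> FI Q"
proof -
  have "(\<lambda>x y. a x y + b x y) \<in> incidence Q"
    unfolding incidence_def
  proof (intro CollectI allI impI)
    fix x y assume "a x y + b x y \<noteq> 0"
    then have "a x y \<noteq> 0 \<or> b x y \<noteq> 0" by auto
    then show "x \<in> Q \<and> y \<in> Q \<and> x \<le> y" using FI_incD[OF a] FI_incD[OF b] by blast
  qed
  moreover have "finitary Q (\<lambda>x y. a x y + b x y)"
    unfolding finitary_def
  proof (intro ballI impI)
    fix x y assume xy: "x \<in> Q" "y \<in> Q" "x < y"
    have "{(u, v). u \<in> Q \<and> v \<in> Q \<and> x \<le> u \<and> u < v \<and> v \<le> y \<and> a u v + b u v \<noteq> 0}
       \<subseteq> NN Q a x y \<union> NN Q b x y" unfolding NN_def by auto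
    then show "finite {(u, v). u \<in> Q \<and> v \<in> Q \<and> x \<le> u \<and> u < v \<and> v \<le> y \<and> a u v + b u v \<noteq> 0}"
      using NN_fin[OF a xy(1,2)] NN_fin[OF b xy(1,2)] finite_subset by blast
  qed
  ultimately show ?thesis by (simp add: FI_def)
qed

lemma minus_FI:
  assumes a: "a \<in> FI Q" and b: "b \<in> FI Q"
  shows "(\<lambda>x y. a x y - b x y) \<in> FI Q"
proof -
  have "(\<lambda>x y. a x y - b x y) \<in> incidence Q"
    unfolding incidence_def
  proof (intro CollectI allI impI)
    fix x y assume "a x y - b x y \<noteq> 0"
    then have "a x y \<noteq> 0 \<or> b x y \<noteq> 0" by auto
    then show "x \<in> Q \<and> y \<in> Q \<and> x \<le> y" using FI_incD[OF a] FI_incD[OF b] by blast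
  qed
  moreover have "finitary Q (\<lambda>x y. a x y - b x y)"
    unfolding finitary_def
  proof (intro ballI impI)
    fix x y assume xy: "x \<in> Q" "y \<in> Q" "x < y"
    have "{(u, v). u \<in> Q \<and> v \<in> Q \<and> x \<le> u \<and> u < v \<and> v \<le> y \<and> a u v - b u v \<noteq> 0}
       \<subseteq> NN Q a x y \<union> NN Q b x y" unfolding NN_def by auto
    then show "finite {(u, v). u \<in> Q \<and> v \<in> Q \<and> x \<le> u \<and> u < v \<and> v \<le> y \<and> a u v - b u v \<noteq> 0}"
      using NN_fin[OF a xy(1,2)] NN_fin[OF b xy(1,2)] finite_subset by blast
  qed
  ultimately show ?thesis by (simp add: FI_def)
qed

lemma conv_distR_plus:
  "conv Q m (\<lambda>x y. h x y + k x y) = (\<lambda>x y. conv Q m h x y + conv Q m k x y)"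
  unfolding conv_def by (intro ext) (simp add: distrib_left sum.distrib)

lemma conv_distR_minus:
  "conv Q m (\<lambda>x y. h x y - k x y) = (\<lambda>x y. conv Q m h x y - conv Q m k x y)"
  unfolding conv_def by (intro ext) (simp add: right_diff_distrib sum_subtractf)

lemma conv_distL_plus:
  assumes h: "h \<in> FI Q" and k: "k \<in> FI Q" and m: "m \<in> incidence Q"
  shows "conv Q (\<lambda>x y. h x y + k x y) m = (\<lambda>x y. conv Q h m x y + conv Q k m x y)"
proof (rule ext, rule ext)
  fix x y
  show "conv Q (\<lambda>x y. h x y + k x y) m x y = conv Q h m x y + conv Q k m x y"
  proof (cases "x \<in> Q \<and> y \<in> Q \<and> x \<le> y")
    case False
    then show ?thesis using conv_out[OF False, of "\<lambda>x y. h x y + k x y" m] conv_out[OF False, of "\<lambda>x y. h x y - k x y" m]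
      conv_out[OF False, of h m] conv_out[OF False, of k m] by simp
  next
    case True
    define F where "F = {z \<in> Q. x \<le> z \<and> z \<le> y \<and> h x z \<noteq> 0} \<union> {z \<in> Q. x \<le> z \<and> z \<le> y \<and> k x z \<noteq> 0}"
    have fF: "finite F" unfolding F_def using supp_fin[OF h] supp_fin[OF k] True by auto
    have 1: "conv Q (\<lambda>x y. h x y + k x y) m x y = (\<Sum>z\<in>F. (h x z + k x z) * m z y)"
      by (rule conv_sum[OF plus_FI[OF h k] m fF])
        (use FI_incD[OF h] FI_incD[OF k] incD[OF m] in \<open>force simp: F_def\<close>)
    have 2: "conv Q h m x y = (\<Sum>z\<in>F. h x z * m z y)"
      by (rule conv_sum[OF h m fF]) (use FI_incD[OF h] incD[OF m] in \<open>force simp: F_def\<close>)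
    have 3: "conv Q k m x y = (\<Sum>z\<in>F. k x z * m z y)"
      by (rule conv_sum[OF k m fF]) (use FI_incD[OF k] incD[OF m] in \<open>force simp: F_def\<close>)
    show ?thesis unfolding 1 2 3 by (simp add: distrib_right sum.distrib)
  qed
qed

lemma conv_distL_minus:
  assumes h: "h \<in> FI Q" and k: "k \<in> FI Q" and m: "m \<in> incidence Q"
  shows "conv Q (\<lambda>x y. h x y - k x y) m = (\<lambda>x y. conv Q h m x y - conv Q k m x y)"
proof (rule ext, rule ext)
  fix x y
  show "conv Q (\<lambda>x y. h x y - k x y) m x y = conv Q h m x y - conv Q k m x y"
  proof (cases "x \<in> Q \<and> y \<in> Q \<and> x \<le> y")
    case False
    then show ?thesis using conv_out[OF False, of "\<lambda>x y. h x y + k x y" m] conv_out[OF False, of "\<lambda>x y. h x y - k x y" m]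
      conv_out[OF False, of h m] conv_out[OF False, of k m] by simp
  next
    case True
    define F where "F = {z \<in> Q. x \<le> z \<and> z \<le> y \<and> h x z \<noteq> 0} \<union> {z \<in> Q. x \<le> z \<and> z \<le> y \<and> k x z \<noteq> 0}"
    have fF: "finite F" unfolding F_def using supp_fin[OF h] supp_fin[OF k] True by auto
    have 1: "conv Q (\<lambda>x y. h x y - k x y) m x y = (\<Sum>z\<in>F. (h x z - k x z) * m z y)"
      by (rule conv_sum[OF minus_FI[OF h k] m fF])
        (use FI_incD[OF h] FI_incD[OF k] incD[OF m] in \<open>force simp: F_def\<close>)
    have 2: "conv Q h m x y = (\<Sum>z\<in>F. h x z * m z y)"
      by (rule conv_sum[OF h m fF]) (use FI_incD[OF h] incD[OF m] in \<open>force simp: F_def\<close>)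
    have 3: "conv Q k m x y = (\<Sum>z\<in>F. k x z * m z y)"
      by (rule conv_sum[OF k m fF]) (use FI_incD[OF k] incD[OF m] in \<open>force simp: F_def\<close>)
    show ?thesis unfolding 1 2 3 by (simp add: left_diff_distrib sum_subtractf)
  qed
qed

definition delta :: "'a \<Rightarrow> 'a \<Rightarrow> 'a \<Rightarrow> 'a \<Rightarrow> 'k::field" where
  "delta p q = (\<lambda>x y. if x = p \<and> y = q then 1 else 0)"

lemma delta_FI:
  assumes "p \<in> Q" "q \<in> Q" "p \<le> q"
  shows "(delta p q :: 'a \<Rightarrow> 'a \<Rightarrow> 'k::field) \<in> FI (Q::'a::order set)"
proof -
  have "(delta p q :: 'a \<Rightarrow> 'a \<Rightarrow> 'k) \<in> incidence Q" using assms by (auto simp: incidence_def delta_def)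
  moreover have "finitary Q (delta p q :: 'a \<Rightarrow> 'a \<Rightarrow> 'k)" unfolding finitary_def
  proof (intro ballI impI)
    fix x y
    have "{(u, v). u \<in> Q \<and> v \<in> Q \<and> x \<le> u \<and> u < v \<and> v \<le> y \<and> delta p q u v \<noteq> (0::'k)} \<subseteq> {(p, q)}"
      by (auto simp: delta_def split: if_splits)
    then show "finite {(u, v). u \<in> Q \<and> v \<in> Q \<and> x \<le> u \<and> u < v \<and> v \<le> y \<and> delta p q u v \<noteq> (0::'k)}"
      using finite_subset by blast
  qed
  ultimately show ?thesis by (simp add: FI_def)
qed

lemma conv_delta_entry:
  assumes h: "h \<in> FI Q" and e: "e \<in> FI Q" and pq: "p \<in> Q" "q \<in> Q" "p \<le> q"
  shows "conv Q (conv Q h (delta p q)) e u v = h u p * e q v"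
proof -
  have dI: "delta p q \<in> FI Q" using delta_FI[OF pq] .
  have hd: "conv Q h (delta p q) \<in> FI Q" using conv_FI[OF h dI] .
  have 1: "\<And>w. conv Q h (delta p q) u w = h u p * delta p q p w"
    by (subst conv_sum[OF h FI_inc[OF dI], of "{p}"]) (auto simp: delta_def split: if_splits)
  have "conv Q (conv Q h (delta p q)) e u v = (\<Sum>w\<in>{q}. conv Q h (delta p q) u w * e w v)"
    by (rule conv_sum[OF hd FI_inc[OF e]]) (unfold 1, auto simp: delta_def split: if_splits)
  then show ?thesis by (simp add: 1, simp add: delta_def)
qed



definition cmp :: "'a::order set \<Rightarrow> 'a \<Rightarrow> 'a set" where
  "cmp P x = (comp_rel P)\<^sup>* `` {x}"

lemma components_cmp: "C \<in> components P \<Longrightarrow> \<exists>x0\<in>P. C = cmp P x0"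
  by (auto simp: components_def cmp_def)

lemma cmp_components: "x \<in> P \<Longrightarrow> cmp P x \<in> components P"
  by (auto simp: components_def cmp_def)

lemma rt_in: "(x0, z) \<in> (comp_rel P)\<^sup>* \<Longrightarrow> x0 \<in> P \<Longrightarrow> z \<in> P"
  by (induction rule: rtrancl_induct) (auto simp: comp_rel_def)

lemma cmp_sub: "x0 \<in> P \<Longrightarrow> cmp P x0 \<subseteq> P"
  using rt_in by (auto simp: cmp_def)

lemma cmp_self: "x \<in> cmp P x"
  by (simp add: cmp_def)

lemma cmp_closed:
  assumes "x0 \<in> P" "x \<in> cmp P x0" "z \<in> P" "x \<le> z \<or> z \<le> x"
  shows "z \<in> cmp P x0"
proof -
  have "x \<in> P" using cmp_sub assms by blast
  then have "(x, z) \<in> comp_rel P" using assms by (auto simp: comp_rel_def)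
  then show ?thesis using assms(2) unfolding cmp_def by (auto intro: rtrancl_into_rtrancl)
qed

lemma sym_comp_rel: "sym (comp_rel P)"
  by (auto simp: sym_def comp_rel_def)

lemma cmp_eq:
  assumes "x \<in> cmp P x0"
  shows "cmp P x = cmp P x0"
proof -
  have 1: "(x0, x) \<in> (comp_rel P)\<^sup>*" using assms by (simp add: cmp_def)
  have 2: "(x, x0) \<in> (comp_rel P)\<^sup>*" using sym_rtrancl[OF sym_comp_rel] 1 by (auto simp: sym_def)
  show ?thesis unfolding cmp_def using 1 2 by (auto intro: rtrancl_trans)
qed

lemma restrict_FI:
  assumes C: "C \<subseteq> P" and a: "a \<in> FI P"
  shows "restrict_to C a \<in> FI C"
proof -
  have "restrict_to C a \<in> incidence C"
    using FI_incD[OF a] by (auto simp: incidence_def restrict_to_def)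
  moreover have "finitary C (restrict_to C a)" unfolding finitary_def
  proof (intro ballI impI)
    fix x y assume xy: "x \<in> C" "y \<in> C" "x < y"
    have "{(u, v). u \<in> C \<and> v \<in> C \<and> x \<le> u \<and> u < v \<and> v \<le> y \<and> restrict_to C a u v \<noteq> 0}
      \<subseteq> NN P a x y" using C by (auto simp: NN_def restrict_to_def)
    then show "finite {(u, v). u \<in> C \<and> v \<in> C \<and> x \<le> u \<and> u < v \<and> v \<le> y \<and> restrict_to C a u v \<noteq> 0}"
      using NN_fin[OF a] xy C finite_subset by blast
  qed
  ultimately show ?thesis by (simp add: FI_def)
qed

lemma restrict_conv_entry:
  assumes x0: "x0 \<in> P" and x: "x \<in> cmp P x0" and y: "y \<in> cmp P x0"
  shows "conv (cmp P x0) (restrict_to (cmp P x0) a) (restrict_to (cmp P x0) b) x y = conv P a b x y"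
proof -
  let ?C = "cmp P x0"
  have sub: "?C \<subseteq> P" using cmp_sub[OF x0] .
  have S: "{z \<in> ?C. x \<le> z \<and> z \<le> y \<and> restrict_to ?C a x z \<noteq> 0} = {z \<in> P. x \<le> z \<and> z \<le> y \<and> a x z \<noteq> 0}"
    using sub x cmp_closed[OF x0 x] by (auto simp: restrict_to_def)
  have "(\<Sum>z\<in>{z \<in> ?C. x \<le> z \<and> z \<le> y \<and> restrict_to ?C a x z \<noteq> 0}. restrict_to ?C a x z * restrict_to ?C b z y)
      = (\<Sum>z\<in>{z \<in> P. x \<le> z \<and> z \<le> y \<and> a x z \<noteq> 0}. a x z * b z y)"
    unfolding S
    by (rule sum.cong[OF refl]) (use x y cmp_closed[OF x0 x] in \<open>auto simp: restrict_to_def\<close>)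
  then show ?thesis using x y sub unfolding conv_def by auto
qed

lemma restrict_conv:
  assumes x0: "x0 \<in> P"
  shows "restrict_to (cmp P x0) (conv P a b) = conv (cmp P x0) (restrict_to (cmp P x0) a) (restrict_to (cmp P x0) b)"
proof (rule ext, rule ext)
  fix x y
  show "restrict_to (cmp P x0) (conv P a b) x y = conv (cmp P x0) (restrict_to (cmp P x0) a) (restrict_to (cmp P x0) b) x y"
  proof (cases "x \<in> cmp P x0 \<and> y \<in> cmp P x0")
    case True
    then show ?thesis using restrict_conv_entry[OF x0, of x y a b]
      by (simp add: restrict_to_def[of "cmp P x0" "conv P a b"])
  next
    case False
    then show ?thesis unfolding restrict_to_def using conv_out[of x "cmp P x0" y] by auto
  qed
qed

lemma glue:
  assumes h1: "h1 \<in> incidence P" and h2: "h2 \<in> incidence P"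
    and eq: "\<And>x0. x0 \<in> P \<Longrightarrow> restrict_to (cmp P x0) h1 = restrict_to (cmp P x0) h2"
  shows "h1 = h2"
proof (rule ext, rule ext)
  fix x y
  have key: "\<And>h. h \<in> incidence P \<Longrightarrow> h x y \<noteq> 0 \<Longrightarrow> x \<in> P \<and> restrict_to (cmp P x) h x y = h x y"
  proof -
    fix h assume h: "h \<in> incidence P" "h x y \<noteq> 0"
    then have "x \<in> P" "y \<in> P" "x \<le> y" using incD by blast+
    then have "y \<in> cmp P x" using cmp_closed[OF _ cmp_self] by blast
    then show "x \<in> P \<and> restrict_to (cmp P x) h x y = h x y" using \<open>x \<in> P\<close> cmp_self[of x P]
      by (simp add: restrict_to_def)
  qed
  show "h1 x y = h2 x y"
  proof (cases "h1 x y = 0 \<and> h2 x y = 0")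
    case True then show ?thesis by simp
  next
    case False
    then obtain h where "h \<in> {h1, h2}" "h x y \<noteq> 0" by auto
    then have xP: "x \<in> P" and "y \<in> cmp P x" using h1 h2 incD cmp_closed[OF _ cmp_self] by blast+
    then show ?thesis using eq[OF xP] cmp_self[of x P] unfolding restrict_to_def
      by (metis (mono_tags, lifting))
  qed
qed

lemma one_restrict: "x0 \<in> P \<Longrightarrow> restrict_to (cmp P x0) (one_FI P) = one_FI (cmp P x0)"
  using cmp_sub[of x0 P] by (auto simp: restrict_to_def one_FI_def intro!: ext)



lemma g1_lemma:
  assumes a: "a \<in> FI P" and b: "b \<in> FI P"
    and aba: "conv P (conv P a b) a = a" and bab: "conv P (conv P b a) b = b"
    and uniq: "\<And>b'. b' \<in> FI P \<Longrightarrow> conv P (conv P a b') a = a \<Longrightarrow> conv P (conv P b' a) b' = b' \<Longrightarrow> b' = b"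
    and pq: "p \<in> P" "q \<in> P" "p \<le> q"
  shows "(one_FI P u p - conv P b a u p) * conv P a b q v = 0"
proof -
  define e where "e = conv P a b"
  define f where "f = conv P b a"
  define h where "h = (\<lambda>x y. one_FI P x y - f x y)"
  define g where "g = conv P (conv P h (delta p q)) e"
  have eI: "e \<in> FI P" unfolding e_def using conv_FI[OF a b] .
  have fI: "f \<in> FI P" unfolding f_def using conv_FI[OF b a] .
  have hI: "h \<in> FI P" unfolding h_def using minus_FI[OF one_FI fI] .
  have dI: "delta p q \<in> FI P" using delta_FI[OF pq] .
  have hdI: "conv P h (delta p q) \<in> FI P" using conv_FI[OF hI dI] .
  have gI: "g \<in> FI P" unfolding g_def using conv_FI[OF hdI eI] .
  have ah: "conv P a h = (\<lambda>x y. 0)"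
  proof -
    have "conv P a h = (\<lambda>x y. conv P a (one_FI P) x y - conv P a f x y)"
      unfolding h_def by (rule conv_distR_minus)
    also have "conv P a f = a" unfolding f_def using conv_assoc[OF a b a] aba by simp
    finally show ?thesis using conv_one_right[OF a] by simp
  qed
  have ag: "conv P a g = (\<lambda>x y. 0)"
  proof -
    have "conv P a g = conv P (conv P (conv P a h) (delta p q)) e"
      unfolding g_def using conv_assoc[OF a hdI eI] conv_assoc[OF a hI dI] by simp
    then show ?thesis using ah by (simp add: conv_zero_left)
  qed
  have ee: "conv P e e = e"
    unfolding e_def using conv_assoc[OF conv_FI[OF a b] a b] aba by simp
  have ge: "conv P g e = g"
    unfolding g_def using conv_assoc[OF hdI eI eI] ee by simp
  define b' where "b' = (\<lambda>x y. b x y + g x y)"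
  have b'I: "b' \<in> FI P" unfolding b'_def using plus_FI[OF b gI] .
  have ab': "conv P a b' = e"
    unfolding b'_def conv_distR_plus ag e_def by simp
  have 1: "conv P (conv P a b') a = a" using ab' aba e_def by simp
  have ga: "conv P g a \<in> FI P" using conv_FI[OF gI a] .
  have "conv P b' a = (\<lambda>x y. f x y + conv P g a x y)"
    unfolding b'_def f_def by (rule conv_distL_plus[OF b gI FI_inc[OF a]])
  then have "conv P (conv P b' a) b' = (\<lambda>x y. conv P f b' x y + conv P (conv P g a) b' x y)"
    using conv_distL_plus[OF fI ga FI_inc[OF b'I]] by simp
  also have "conv P f b' = b"
  proof -
    have "conv P f b' = (\<lambda>x y. conv P f b x y + conv P f g x y)"
      unfolding b'_def by (rule conv_distR_plus)
    moreover have "conv P f b = b" unfolding f_def using bab .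
    moreover have "conv P f g = (\<lambda>x y. 0)"
      unfolding f_def using conv_assoc[OF b a gI] ag conv_zero_right by metis
    ultimately show ?thesis by simp
  qed
  also have "conv P (conv P g a) b' = g"
  proof -
    have "conv P (conv P g a) b' = (\<lambda>x y. conv P (conv P g a) b x y + conv P (conv P g a) g x y)"
      unfolding b'_def by (rule conv_distR_plus)
    moreover have "conv P (conv P g a) b = g" using conv_assoc[OF gI a b] ge e_def by simp
    moreover have "conv P (conv P g a) g = (\<lambda>x y. 0)"
      using conv_assoc[OF gI a gI] ag conv_zero_right by metis
    ultimately show ?thesis by simp
  qed
  finally have 2: "conv P (conv P b' a) b' = b'" unfolding b'_def by simp
  have "b' = b" using uniq[OF b'I 1 2] .
  then have "g u v = 0" unfolding b'_def by (metis add_cancel_left_right)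
  moreover have "g u v = h u p * e q v" unfolding g_def by (rule conv_delta_entry[OF hI eI pq])
  ultimately show ?thesis unfolding h_def f_def e_def by simp
qed

lemma g2_lemma:
  assumes a: "a \<in> FI P" and b: "b \<in> FI P"
    and aba: "conv P (conv P a b) a = a" and bab: "conv P (conv P b a) b = b"
    and uniq: "\<And>b'. b' \<in> FI P \<Longrightarrow> conv P (conv P a b') a = a \<Longrightarrow> conv P (conv P b' a) b' = b' \<Longrightarrow> b' = b"
    and pq: "p \<in> P" "q \<in> P" "p \<le> q"
  shows "conv P b a u p * (one_FI P q v - conv P a b q v) = 0"
proof -
  define e where "e = conv P a b"
  define f where "f = conv P b a"
  define k where "k = (\<lambda>x y. one_FI P x y - e x y)"
  define g where "g = conv P (conv P f (delta p q)) k"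
  have eI: "e \<in> FI P" unfolding e_def using conv_FI[OF a b] .
  have fI: "f \<in> FI P" unfolding f_def using conv_FI[OF b a] .
  have kI: "k \<in> FI P" unfolding k_def using minus_FI[OF one_FI eI] .
  have dI: "delta p q \<in> FI P" using delta_FI[OF pq] .
  have fdI: "conv P f (delta p q) \<in> FI P" using conv_FI[OF fI dI] .
  have gI: "g \<in> FI P" unfolding g_def using conv_FI[OF fdI kI] .
  have ka: "conv P k a = (\<lambda>x y. 0)"
  proof -
    have "conv P k a = (\<lambda>x y. conv P (one_FI P) a x y - conv P e a x y)"
      unfolding k_def by (rule conv_distL_minus[OF one_FI eI FI_inc[OF a]])
    then show ?thesis using conv_one_left[OF FI_inc[OF a]] aba e_def by simp
  qed
  have ga: "conv P g a = (\<lambda>x y. 0)"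
    unfolding g_def using conv_assoc[OF fdI kI a] ka conv_zero_right by metis
  have ff: "conv P f f = f"
    unfolding f_def using conv_assoc[OF conv_FI[OF b a] b a] bab by simp
  have fg: "conv P f g = g"
    unfolding g_def using conv_assoc[OF fI fdI kI] conv_assoc[OF fI fI dI] ff by simp
  define b' where "b' = (\<lambda>x y. b x y + g x y)"
  have b'I: "b' \<in> FI P" unfolding b'_def using plus_FI[OF b gI] .
  have b'a: "conv P b' a = f"
    unfolding b'_def f_def using conv_distL_plus[OF b gI FI_inc[OF a]] ga by simp
  have 2: "conv P (conv P b' a) b' = b'"
  proof -
    have "conv P f b' = (\<lambda>x y. conv P f b x y + conv P f g x y)"
      unfolding b'_def by (rule conv_distR_plus)
    then show ?thesis using b'a fg bab f_def b'_def by simp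
  qed
  have 1: "conv P (conv P a b') a = a"
  proof -
    have ag: "conv P a g \<in> FI P" using conv_FI[OF a gI] .
    have "conv P a b' = (\<lambda>x y. e x y + conv P a g x y)"
      unfolding b'_def e_def by (rule conv_distR_plus)
    then have "conv P (conv P a b') a = (\<lambda>x y. conv P e a x y + conv P (conv P a g) a x y)"
      using conv_distL_plus[OF eI ag FI_inc[OF a]] by simp
    moreover have "conv P (conv P a g) a = (\<lambda>x y. 0)"
      using conv_assoc[OF a gI a] ga conv_zero_right by metis
    ultimately show ?thesis using aba e_def by simp
  qed
  have "b' = b" using uniq[OF b'I 1 2] .
  then have "g u v = 0" unfolding b'_def by (metis add_cancel_left_right)
  moreover have "g u v = f u p * k q v" unfolding g_def by (rule conv_delta_entry[OF fI kI pq])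
  ultimately show ?thesis unfolding k_def f_def e_def by simp
qed



lemma diag_conv:
  assumes a: "a \<in> FI P" and b: "b \<in> incidence P"
  shows "conv P a b x x = a x x * b x x"
  by (subst conv_sum[OF a b, of "{x}"]) (use FI_incD[OF a] incD[OF b] in \<open>auto intro: order_antisym\<close>)

lemma only_if:
  assumes a: "a \<in> FI P" and sr: "superregular_in (FI P) (conv P) a"
  shows "\<forall>C \<in> components P. restrict_to C a = (\<lambda>x y. 0) \<or>
       invertible_in (FI C) (conv C) (one_FI C) (restrict_to C a)"
proof
  obtain b where b: "b \<in> FI P" and aba: "conv P (conv P a b) a = a" and bab: "conv P (conv P b a) b = b"
    and uniq: "\<And>b'. b' \<in> FI P \<Longrightarrow> conv P (conv P a b') a = a \<Longrightarrow> conv P (conv P b' a) b' = b' \<Longrightarrow> b' = b"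
    using sr unfolding superregular_in_def by metis
  define e where "e = conv P a b"
  define f where "f = conv P b a"
  define d where "d = (\<lambda>x. e x x)"
  have eI: "e \<in> FI P" unfolding e_def using conv_FI[OF a b] .
  have fI: "f \<in> FI P" unfolding f_def using conv_FI[OF b a] .
  have G1: "\<And>p q u v. p \<in> P \<Longrightarrow> q \<in> P \<Longrightarrow> p \<le> q \<Longrightarrow> (one_FI P u p - f u p) * e q v = 0"
    unfolding e_def f_def using g1_lemma[OF a b aba bab uniq] by blast
  have G2: "\<And>p q u v. p \<in> P \<Longrightarrow> q \<in> P \<Longrightarrow> p \<le> q \<Longrightarrow> f u p * (one_FI P q v - e q v) = 0"
    unfolding e_def f_def using g2_lemma[OF a b aba bab uniq] by blast
  have fd: "\<And>x. f x x = d x"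
    unfolding f_def d_def e_def using diag_conv[OF a FI_inc[OF b]] diag_conv[OF b FI_inc[OF a]]
    by (simp add: mult.commute)
  have d01: "\<And>x. d x = 0 \<or> d x = 1"
  proof -
    fix x
    have "conv P e a x x = e x x * a x x" using diag_conv[OF eI FI_inc[OF a]] .
    then have "e x x * a x x = a x x" using aba e_def by simp
    moreover have "e x x = a x x * b x x" unfolding e_def using diag_conv[OF a FI_inc[OF b]] .
    ultimately show "d x = 0 \<or> d x = 1" unfolding d_def
      by (metis mult_cancel_right1 mult_zero_left)
  qed
  have dstep: "\<And>p q. p \<in> P \<Longrightarrow> q \<in> P \<Longrightarrow> p \<le> q \<Longrightarrow> d p = d q"
  proof -
    fix p q assume pq: "p \<in> P" "q \<in> P" "p \<le> q"
    have 1: "(1 - d p) * d q = 0" using G1[OF pq, of p q] pq fd unfolding d_def one_FI_def by simp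
    have 2: "d p * (1 - d q) = 0" using G2[OF pq, of p q] pq fd unfolding d_def one_FI_def by simp
    show "d p = d q" using 1 2 d01[of p] d01[of q] by auto
  qed
  have dconst: "\<And>x0 z. x0 \<in> P \<Longrightarrow> z \<in> cmp P x0 \<Longrightarrow> d z = d x0"
  proof -
    fix x0 z assume x0: "x0 \<in> P" and z: "z \<in> cmp P x0"
    have "(x0, z) \<in> (comp_rel P)\<^sup>*" using z by (simp add: cmp_def)
    then show "d z = d x0"
    proof (induction rule: rtrancl_induct)
      case (step y z)
      then have yz: "y \<in> P" "z \<in> P" "y \<le> z \<or> z \<le> y" by (auto simp: comp_rel_def)
      then have "d y = d z" using dstep by metis
      then show ?case using step.IH by simp
    qed simp
  qed
  fix C assume "C \<in> components P"
  then obtain x0 where x0: "x0 \<in> P" and C: "C = cmp P x0" using components_cmp by blast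
  have sub: "C \<subseteq> P" using cmp_sub[OF x0] C by simp
  show "restrict_to C a = (\<lambda>x y. 0) \<or> invertible_in (FI C) (conv C) (one_FI C) (restrict_to C a)"
  proof (cases "d x0 = 0")
    case True
    have "restrict_to C a = (\<lambda>x y. 0)"
    proof (rule ext, rule ext)
      fix x y
      show "restrict_to C a x y = 0"
      proof (cases "x \<in> C \<and> y \<in> C")
        case xy: True
        have xP: "x \<in> P" using xy sub by blast
        have dx: "d x = 0" using dconst[OF x0] xy C True by simp
        have ez: "\<And>z. e x z = 0" using G1[OF xP xP order_refl, of x] dx fd xP
          by (simp add: one_FI_def)
        have "conv P e a x y = (\<Sum>z\<in>{}. e x z * a z y)"
          by (rule conv_sum[OF eI FI_inc[OF a]]) (simp_all add: ez)
        then show ?thesis using aba e_def by (simp add: restrict_to_def)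
      next
        case False then show ?thesis by (auto simp: restrict_to_def)
      qed
    qed
    then show ?thesis by simp
  next
    case False
    then have d1: "\<And>x. x \<in> C \<Longrightarrow> d x = 1" using dconst[OF x0] C d01 by metis
    have erow: "\<And>x y. x \<in> C \<Longrightarrow> e x y = one_FI P x y"
    proof -
      fix x y assume x: "x \<in> C"
      then have xP: "x \<in> P" using sub by blast
      show "e x y = one_FI P x y" using G2[OF xP xP order_refl, of x y] d1[OF x] fd by simp
    qed
    have fcol: "\<And>x y. y \<in> C \<Longrightarrow> f x y = one_FI P x y"
    proof -
      fix x y assume y: "y \<in> C"
      then have yP: "y \<in> P" using sub by blast
      show "f x y = one_FI P x y" using G1[OF yP yP order_refl, of x y] d1[OF y] d_def by simp
    qed
    have re: "restrict_to C e = restrict_to C (one_FI P)"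
      by (auto simp: restrict_to_def erow intro!: ext)
    have rf: "restrict_to C f = restrict_to C (one_FI P)"
      by (auto simp: restrict_to_def fcol intro!: ext)
    have "invertible_in (FI C) (conv C) (one_FI C) (restrict_to C a)"
      unfolding invertible_in_def
    proof (intro conjI bexI)
      show "restrict_to C a \<in> FI C" using restrict_FI[OF sub a] .
      show "restrict_to C b \<in> FI C" using restrict_FI[OF sub b] .
      show "conv C (restrict_to C a) (restrict_to C b) = one_FI C"
        using restrict_conv[OF x0, of a b] re one_restrict[OF x0] C e_def by simp
      show "conv C (restrict_to C b) (restrict_to C a) = one_FI C"
        using restrict_conv[OF x0, of b a] rf one_restrict[OF x0] C f_def by simp
    qed
    then show ?thesis by simp
  qed
qed



lemma if_dir:
  assumes a: "a \<in> FI P"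
    and H: "\<forall>C \<in> components P. restrict_to C a = (\<lambda>x y. 0) \<or>
       invertible_in (FI C) (conv C) (one_FI C) (restrict_to C a)"
  shows "superregular_in (FI P) (conv P) a"
proof -
  define isinv where "isinv C = invertible_in (FI C) (conv C) (one_FI C) (restrict_to C a)" for C
  define inv where "inv C = (if isinv C then (SOME c. c \<in> FI C \<and> conv C (restrict_to C a) c = one_FI C
      \<and> conv C c (restrict_to C a) = one_FI C) else (\<lambda>x y. 0))" for C
  have invP: "\<And>C. isinv C \<Longrightarrow> inv C \<in> FI C \<and> conv C (restrict_to C a) (inv C) = one_FI C
      \<and> conv C (inv C) (restrict_to C a) = one_FI C"
  proof -
    fix C assume i: "isinv C"
    then have ex: "\<exists>c. c \<in> FI C \<and> conv C (restrict_to C a) c = one_FI C \<and> conv C c (restrict_to C a) = one_FI C"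
      unfolding isinv_def invertible_in_def by blast
    then show "inv C \<in> FI C \<and> conv C (restrict_to C a) (inv C) = one_FI C
      \<and> conv C (inv C) (restrict_to C a) = one_FI C"
      using someI_ex[OF ex] i unfolding inv_def by simp
  qed
  have invFI: "inv C \<in> FI C" for C
  proof (cases "isinv C")
    case True then show ?thesis using invP by blast
  next
    case False then show ?thesis unfolding inv_def using zero_FI by simp
  qed
  have notinv: "\<And>x0. x0 \<in> P \<Longrightarrow> \<not> isinv (cmp P x0) \<Longrightarrow>
      restrict_to (cmp P x0) a = (\<lambda>x y. 0) \<and> inv (cmp P x0) = (\<lambda>x y. 0)"
    using H cmp_components unfolding isinv_def inv_def by metis
  define b where "b x y = (if x \<in> P \<and> y \<in> cmp P x then inv (cmp P x) x y else 0)" for x y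
  have rb: "\<And>x0. x0 \<in> P \<Longrightarrow> restrict_to (cmp P x0) b = inv (cmp P x0)"
  proof (rule ext, rule ext)
    fix x0 x y assume x0: "x0 \<in> P"
    show "restrict_to (cmp P x0) b x y = inv (cmp P x0) x y"
    proof (cases "x \<in> cmp P x0 \<and> y \<in> cmp P x0")
      case True
      then have "x \<in> P" "cmp P x = cmp P x0" using cmp_sub[OF x0] cmp_eq by blast+
      then show ?thesis using True by (simp add: restrict_to_def b_def)
    next
      case False
      then show ?thesis using FI_incD[OF invFI, of "cmp P x0" x y] by (auto simp: restrict_to_def)
    qed
  qed
  have bI: "b \<in> FI P"
  proof -
    have "b \<in> incidence P"
      unfolding incidence_def
    proof (intro CollectI allI impI)
      fix x y assume nz: "b x y \<noteq> 0"
      then have x: "x \<in> P" "y \<in> cmp P x" "inv (cmp P x) x y \<noteq> 0" by (auto simp: b_def split: if_splits)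
      then show "x \<in> P \<and> y \<in> P \<and> x \<le> y" using FI_incD[OF invFI] cmp_sub by blast
    qed
    moreover have "finitary P b" unfolding finitary_def
    proof (intro ballI impI)
      fix x y assume xy: "x \<in> P" "y \<in> P" "x < y"
      let ?C = "cmp P x"
      have xC: "x \<in> ?C" by (rule cmp_self)
      have yC: "y \<in> ?C" using cmp_closed[OF xy(1) xC xy(2)] xy(3) less_imp_le by blast
      have key: "(u, v) \<in> NN ?C (inv ?C) x y"
        if uv: "u \<in> P" "v \<in> P" "x \<le> u" "u < v" "v \<le> y" "b u v \<noteq> 0" for u v
      proof -
        have uC: "u \<in> ?C" using cmp_closed[OF xy(1) xC uv(1)] uv(3) by simp
        have vC: "v \<in> ?C" using cmp_closed[OF xy(1) yC uv(2)] uv(5) by simp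
        have "cmp P u = ?C" using cmp_eq[OF uC] .
        then have "b u v = inv ?C u v" using uv vC by (simp add: b_def)
        then show "(u, v) \<in> NN ?C (inv ?C) x y" using uv uC vC by (simp add: NN_def)
      qed
      have "{(u, v). u \<in> P \<and> v \<in> P \<and> x \<le> u \<and> u < v \<and> v \<le> y \<and> b u v \<noteq> 0} \<subseteq> NN ?C (inv ?C) x y"
        using key by blast
      then show "finite {(u, v). u \<in> P \<and> v \<in> P \<and> x \<le> u \<and> u < v \<and> v \<le> y \<and> b u v \<noteq> 0}"
        using NN_fin[OF invFI xC yC] finite_subset by blast
    qed
    ultimately show ?thesis by (simp add: FI_def)
  qed
  have raI: "\<And>x0. x0 \<in> P \<Longrightarrow> restrict_to (cmp P x0) a \<in> FI (cmp P x0)"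
    using restrict_FI[OF cmp_sub a] by blast
  have aba: "conv P (conv P a b) a = a"
  proof (rule glue[OF FI_inc[OF conv_FI[OF conv_FI[OF a bI] a]] FI_inc[OF a]])
    fix x0 assume x0: "x0 \<in> P"
    let ?C = "cmp P x0"
    have "restrict_to ?C (conv P (conv P a b) a) = conv ?C (conv ?C (restrict_to ?C a) (inv ?C)) (restrict_to ?C a)"
      by (simp add: restrict_conv[OF x0] rb[OF x0])
    also have "\<dots> = restrict_to ?C a"
    proof (cases "isinv ?C")
      case True
      then show ?thesis using invP conv_one_left[OF FI_inc[OF raI[OF x0]]] by simp
    next
      case False
      then show ?thesis using notinv[OF x0] by (simp add: conv_zero_left)
    qed
    finally show "restrict_to ?C (conv P (conv P a b) a) = restrict_to ?C a" .
  qed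
  have bab: "conv P (conv P b a) b = b"
  proof (rule glue[OF FI_inc[OF conv_FI[OF conv_FI[OF bI a] bI]] FI_inc[OF bI]])
    fix x0 assume x0: "x0 \<in> P"
    let ?C = "cmp P x0"
    have "restrict_to ?C (conv P (conv P b a) b) = conv ?C (conv ?C (inv ?C) (restrict_to ?C a)) (inv ?C)"
      by (simp add: restrict_conv[OF x0] rb[OF x0])
    also have "\<dots> = inv ?C"
    proof (cases "isinv ?C")
      case True
      then show ?thesis using invP conv_one_left[OF FI_inc[OF invFI]] by simp
    next
      case False
      then show ?thesis using notinv[OF x0] by (simp add: conv_zero_left)
    qed
    finally show "restrict_to ?C (conv P (conv P b a) b) = restrict_to ?C b" using rb[OF x0] by simp
  qed
  have uniq: "b' = b" if b': "b' \<in> FI P" and 1: "conv P (conv P a b') a = a" and 2: "conv P (conv P b' a) b' = b'" for b'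
  proof (rule glue[OF FI_inc[OF b'] FI_inc[OF bI]])
    fix x0 assume x0: "x0 \<in> P"
    let ?C = "cmp P x0"
    let ?A = "restrict_to ?C a" and ?B = "restrict_to ?C b'" and ?c = "inv ?C"
    have AI: "?A \<in> FI ?C" using raI[OF x0] .
    have BI: "?B \<in> FI ?C" using restrict_FI[OF cmp_sub[OF x0] b'] .
    have hh1: "conv ?C (conv ?C ?A ?B) ?A = ?A"
      using arg_cong[OF 1, of "restrict_to ?C"] by (simp add: restrict_conv[OF x0])
    have hh2: "conv ?C (conv ?C ?B ?A) ?B = ?B"
      using arg_cong[OF 2, of "restrict_to ?C"] by (simp add: restrict_conv[OF x0])
    have "?B = ?c"
    proof (cases "isinv ?C")
      case True
      then have cI: "?c \<in> FI ?C" and ac: "conv ?C ?A ?c = one_FI ?C" and ca: "conv ?C ?c ?A = one_FI ?C"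
        using invP by blast+
      have ABI: "conv ?C ?A ?B \<in> FI ?C" using conv_FI[OF AI BI] .
      have "conv ?C ?c (conv ?C (conv ?C ?A ?B) ?A) = one_FI ?C" using hh1 ca by simp
      moreover have "conv ?C ?c (conv ?C (conv ?C ?A ?B) ?A) = conv ?C (conv ?C (conv ?C ?c ?A) ?B) ?A"
        using conv_assoc[OF cI ABI AI] conv_assoc[OF cI AI BI] by simp
      ultimately have BA: "conv ?C ?B ?A = one_FI ?C"
        using ca conv_one_left[OF FI_inc[OF BI]] by simp
      have "?c = conv ?C (conv ?C ?B ?A) ?c" using BA conv_one_left[OF FI_inc[OF cI]] by simp
      also have "\<dots> = conv ?C ?B (conv ?C ?A ?c)" using conv_assoc[OF BI AI cI] by simp
      also have "\<dots> = ?B" using ac conv_one_right[OF BI] by simp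
      finally show ?thesis by simp
    next
      case False
      then have A0: "?A = (\<lambda>x y. 0)" and c0: "?c = (\<lambda>x y. 0)" using notinv[OF x0] by blast+
      have "?B = conv ?C (conv ?C ?B ?A) ?B" using hh2 by simp
      also have "\<dots> = (\<lambda>x y. 0)" unfolding A0 by (simp add: conv_zero_left conv_zero_right)
      finally show ?thesis using c0 by simp
    qed
    then show "restrict_to ?C b' = restrict_to ?C b" using rb[OF x0] by simp
  qed
  show ?thesis unfolding superregular_in_def regular_in_def
    using a bI aba bab uniq by blast
qed

theorem corollary4:
  fixes P :: "'a::order set" and \<alpha> :: "'a \<Rightarrow> 'a \<Rightarrow> 'k::field"
  assumes "\<alpha> \<in> FI P"
  shows "superregular_in (FI P) (conv P) \<alpha> \<longleftrightarrow>
    (\<forall>C \<in> components P. restrict_to C \<alpha> = (\<lambda>x y. 0) \<or>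
       invertible_in (FI C) (conv C) (one_FI C) (restrict_to C \<alpha>))"
  using only_if[OF assms] if_dir[OF assms] by blast


end
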